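(* Let $X$ be a connected graph and let the Hamiltonian $M$ be one of $A$, $L$, $Q$. Let $a\neq b$ be vertices of $X$, let $s\in\mathbb{C}\setminus\{0\}$, and let $\mathbf u=\mathbf e_a+s\mathbf e_b$. If $\mathbf u$ is a fixed state (an eigenvector of $M$), then $|\Phi_{\mathbf u}|=1$. Otherwise $$|\Phi_{\mathbf u}|\ \ge\ \left\lceil \frac{\operatorname{dist}(a,b)}{2}\right\rceil ,$$ where $\operatorname{dist}(a,b)$ is the graph distance between $a$ and $b$.
   Context: Graphs are simple, undirected, unweighted and connected. $A$ is the adjacency matrix, $L=D-A$ the Laplacian and $Q=D+A$ the signless Laplacian, where $D$ is the diagonal degree matrix. For a real symmetric matrix $M$ with spectral decomposition $M=\sum_{\lambda\in\operatorname{spec}(M)}\lambda E_\lambda$ ($E_\lambda$ the orthogonal projection onto the $\lambda$-eigenspace), the eigenvalue support of a vector $\mathbf v$ is $\Phi_{\mathbf v}=\{\lambda: E_\lambda\mathbf v\neq \mathbf 0\}$. $\mathbf e_v$ denotes the standard basis vector of vertex $v$. *)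

theory Defs
  imports "HOL-Analysis.Analysis"
begin

text \<open>Graphs on a finite vertex type 'n, given by an edge predicate E.\<close>

definition simple_graph :: "('n \<Rightarrow> 'n \<Rightarrow> bool) \<Rightarrow> bool" where
  "simple_graph E \<longleftrightarrow> (\<forall>x y. E x y \<longrightarrow> E y x) \<and> (\<forall>x. \<not> E x x)"

definition edge_rel :: "('n \<Rightarrow> 'n \<Rightarrow> bool) \<Rightarrow> ('n \<times> 'n) set" where
  "edge_rel E = {(x, y). E x y}"

definition connected_graph :: "('n \<Rightarrow> 'n \<Rightarrow> bool) \<Rightarrow> bool" where
  "connected_graph E \<longleftrightarrow> (\<forall>x y. (x, y) \<in> (edge_rel E)\<^sup>*)"

text \<open>Graph distance: length of a shortest walk.\<close>
definition graph_dist :: "('n \<Rightarrow> 'n \<Rightarrow> bool) \<Rightarrow> 'n \<Rightarrow> 'n \<Rightarrow> nat" where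
  "graph_dist E a b = (LEAST k. (a, b) \<in> (edge_rel E) ^^ k)"

definition vdegree :: "('n::finite \<Rightarrow> 'n \<Rightarrow> bool) \<Rightarrow> 'n \<Rightarrow> nat" where
  "vdegree E v = card {w. E v w}"

definition adj_matrix :: "('n::finite \<Rightarrow> 'n \<Rightarrow> bool) \<Rightarrow> complex^'n^'n" where
  "adj_matrix E = (\<chi> i j. if E i j then 1 else 0)"

definition deg_matrix :: "('n::finite \<Rightarrow> 'n \<Rightarrow> bool) \<Rightarrow> complex^'n^'n" where
  "deg_matrix E = (\<chi> i j. if i = j then of_nat (vdegree E i) else 0)"

definition laplacian :: "('n::finite \<Rightarrow> 'n \<Rightarrow> bool) \<Rightarrow> complex^'n^'n" where
  "laplacian E = deg_matrix E - adj_matrix E"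

definition signless_laplacian :: "('n::finite \<Rightarrow> 'n \<Rightarrow> bool) \<Rightarrow> complex^'n^'n" where
  "signless_laplacian E = deg_matrix E + adj_matrix E"

text \<open>Standard Hermitian inner product on complex^'n.\<close>
definition cinner :: "complex^'n::finite \<Rightarrow> complex^'n \<Rightarrow> complex" where
  "cinner x y = (\<Sum>i\<in>UNIV. cnj (x $ i) * y $ i)"

definition eig_space :: "complex^'n^'n::finite \<Rightarrow> complex \<Rightarrow> (complex^'n) set" where
  "eig_space M \<mu> = {v. M *v v = \<mu> *s v}"

definition mat_spec :: "complex^'n^'n::finite \<Rightarrow> complex set" where
  "mat_spec M = {\<mu>. \<exists>v. v \<noteq> 0 \<and> M *v v = \<mu> *s v}"

text \<open>E_lambda u: the orthogonal projection of u onto the lambda-eig_space.\<close>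
definition eig_proj :: "complex^'n^'n::finite \<Rightarrow> complex \<Rightarrow> complex^'n \<Rightarrow> complex^'n" where
  "eig_proj M \<mu> u = (THE w. w \<in> eig_space M \<mu> \<and>
      (\<forall>v \<in> eig_space M \<mu>. cinner v (u - w) = 0))"

definition eig_support :: "complex^'n^'n::finite \<Rightarrow> complex^'n \<Rightarrow> complex set" where
  "eig_support M u = {\<mu> \<in> mat_spec M. eig_proj M \<mu> u \<noteq> 0}"

definition is_eigenvector :: "complex^'n^'n::finite \<Rightarrow> complex^'n \<Rightarrow> bool" where
  "is_eigenvector M u \<longleftrightarrow> u \<noteq> 0 \<and> (\<exists>\<mu>. M *v u = \<mu> *s u)"

end

theory Submission
  imports Defs "HOL-Computational_Algebra.Fundamental_Theorem_Algebra"
begin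


lemma mv_add: "(M::complex^'n::finite^'m::finite) *v (x + y) = M *v x + M *v y"
  by (simp add: vec_eq_iff matrix_vector_mult_def distrib_left sum.distrib)

lemma mv_smult: "(M::complex^'n::finite^'m::finite) *v (c *s x) = c *s (M *v x)"
  by (simp add: vec_eq_iff matrix_vector_mult_def sum_distrib_left algebra_simps)

lemma mv_sum: "(M::complex^'n::finite^'m::finite) *v (\<Sum>i\<in>I. f i) = (\<Sum>i\<in>I. M *v f i)"
  by (induction I rule: infinite_finite_induct) (auto simp: mv_add)

lemma mv_zero: "(M::complex^'n::finite^'m::finite) *v 0 = 0"
  by (simp add: vec_eq_iff matrix_vector_mult_def)

lemma cinner_add_right: "cinner x (y + z) = cinner x y + cinner x z"
  by (simp add: cinner_def distrib_left sum.distrib)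
lemma cinner_diff_right: "cinner x (y - z) = cinner x y - cinner x z"
  by (simp add: cinner_def right_diff_distrib sum_subtractf)
lemma cinner_smult_right: "cinner x (c *s y) = c * cinner x y"
  by (simp add: cinner_def sum_distrib_left algebra_simps)
lemma cinner_smult_left: "cinner (c *s x) y = cnj c * cinner x y"
  by (simp add: cinner_def sum_distrib_left algebra_simps)
lemma cinner_diff_left: "cinner (x - y) z = cinner x z - cinner y z"
  by (simp add: cinner_def left_diff_distrib sum_subtractf)
lemma cinner_zero_left[simp]: "cinner 0 y = 0"
  by (simp add: cinner_def)

lemma Re_cinner: "Re (cinner x y) = inner x y"
  by (simp add: cinner_def inner_vec_def Re_sum inner_complex_def)

lemma Im_cinner: "Im (cinner x y) = inner (\<i> *s x) y"
  by (simp add: cinner_def inner_vec_def Im_sum inner_complex_def algebra_simps)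

lemma cinner_self_eq_0: "cinner x x = 0 \<longleftrightarrow> x = 0"
proof
  assume "cinner x x = 0"
  then have "inner x x = 0" using Re_cinner[of x x] by simp
  then show "x = 0" by simp
qed simp




definition fpow :: "complex^'n::finite^'n \<Rightarrow> nat \<Rightarrow> complex^'n \<Rightarrow> complex^'n" where
  "fpow M i v = ((\<lambda>x. M *v x) ^^ i) v"

definition peval :: "complex^'n::finite^'n \<Rightarrow> complex poly \<Rightarrow> complex^'n \<Rightarrow> complex^'n" where
  "peval M q v = (\<Sum>i\<le>degree q. coeff q i *s fpow M i v)"

lemma fpow_0[simp]: "fpow M 0 v = v" by (simp add: fpow_def)
lemma fpow_Suc: "fpow M (Suc i) v = M *v fpow M i v" by (simp add: fpow_def)

lemma fpow_add: "fpow M i (x + y) = fpow M i x + fpow M i y"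
  by (induction i) (simp_all add: fpow_Suc mv_add)
lemma fpow_smult: "fpow M i (c *s x) = c *s fpow M i x"
  by (induction i) (simp_all add: fpow_Suc mv_smult)

lemma peval_bound:
  assumes "degree q \<le> n"
  shows "peval M q v = (\<Sum>i\<le>n. coeff q i *s fpow M i v)"
  unfolding peval_def
  by (rule sum.mono_neutral_left) (use assms in \<open>auto simp: coeff_eq_0\<close>)

lemma peval_pCons: "peval M (pCons a q) v = a *s v + M *v peval M q v"
proof -
  have "degree (pCons a q) \<le> Suc (degree q)" by (simp add: degree_pCons_le)
  then have "peval M (pCons a q) v = (\<Sum>i\<le>Suc (degree q). coeff (pCons a q) i *s fpow M i v)"
    by (rule peval_bound)
  also have "\<dots> = a *s v + (\<Sum>i\<le>degree q. coeff q i *s fpow M (Suc i) v)"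
    by (subst sum.atMost_Suc_shift) simp
  also have "(\<Sum>i\<le>degree q. coeff q i *s fpow M (Suc i) v) = M *v peval M q v"
    by (simp add: peval_def mv_sum mv_smult fpow_Suc)
  finally show ?thesis .
qed

lemma peval_0[simp]: "peval M 0 v = 0"
  by (simp add: peval_def)

lemma peval_add: "peval M (p + q) v = peval M p v + peval M q v"
proof -
  define n where "n = max (degree p) (degree q)"
  have "peval M (p + q) v = (\<Sum>i\<le>n. coeff (p+q) i *s fpow M i v)"
    by (rule peval_bound) (simp add: n_def degree_add_le)
  also have "\<dots> = (\<Sum>i\<le>n. coeff p i *s fpow M i v) + (\<Sum>i\<le>n. coeff q i *s fpow M i v)"
    by (simp add: vector_sadd_rdistrib sum.distrib)
  also have "\<dots> = peval M p v + peval M q v"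
    using peval_bound[of p n M v] peval_bound[of q n M v] by (simp add: n_def)
  finally show ?thesis .
qed

lemma peval_smult: "peval M (smult c p) v = c *s peval M p v"
proof -
  have "peval M (smult c p) v = (\<Sum>i\<le>degree p. coeff (smult c p) i *s fpow M i v)"
    by (rule peval_bound) simp
  then show ?thesis by (simp add: peval_def sum_distrib_left vec_eq_iff mult.assoc)
qed

lemma peval_const: "peval M [:c:] v = c *s v"
  by (simp add: peval_def)

lemma peval_mult: "peval M (p * q) v = peval M p (peval M q v)"
proof (induction p)
  case (pCons a p)
  have "peval M (pCons a p * q) v = peval M (smult a q + pCons 0 (p * q)) v"
    by simp
  also have "\<dots> = a *s peval M q v + M *v peval M (p*q) v"
    by (simp add: peval_add peval_smult peval_pCons)
  also have "\<dots> = peval M (pCons a p) (peval M q v)"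
    by (simp add: peval_pCons pCons.IH)
  finally show ?case .
qed simp

lemma peval_linear_factor: "peval M [:-r, 1:] v = M *v v - r *s v"
  by (simp add: peval_pCons peval_const)




definition herm :: "complex^'n::finite^'n \<Rightarrow> bool" where
  "herm M \<longleftrightarrow> (\<forall>i j. M$i$j = cnj (M$j$i))"

lemma herm_cinner:
  assumes "herm M"
  shows "cinner x (M *v y) = cinner (M *v x) y"
proof -
  have "cinner x (M *v y) = (\<Sum>i\<in>UNIV. \<Sum>j\<in>UNIV. cnj (x$i) * M$i$j * y$j)"
    by (simp add: cinner_def matrix_vector_mult_def sum_distrib_left mult.assoc)
  also have "\<dots> = (\<Sum>j\<in>UNIV. \<Sum>i\<in>UNIV. cnj (x$i) * M$i$j * y$j)"
    by (rule sum.swap)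
  also have "\<dots> = cinner (M *v x) y"
  proof -
    have h: "cnj (M$j$i) = M$i$j" for i j using assms unfolding herm_def by (metis complex_cnj_cnj)
    show ?thesis
      by (simp add: cinner_def matrix_vector_mult_def sum_distrib_right sum_distrib_left h mult.commute mult.left_commute)
  qed
  finally show ?thesis .
qed

lemma smult_eq_0: "(c::complex) *s (x::complex^'n::finite) = 0 \<longleftrightarrow> c = 0 \<or> x = 0"
  by (auto simp: vec_eq_iff)

lemma eig_real:
  assumes "herm M" "M *v x = l *s x" "x \<noteq> 0"
  shows "cnj l = l"
proof -
  have "l * cinner x x = cnj l * cinner x x"
    using herm_cinner[OF assms(1), of x x] assms(2) by (simp add: cinner_smult_right cinner_smult_left)
  moreover have "cinner x x \<noteq> 0" using assms(3) cinner_self_eq_0 by blast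
  ultimately show ?thesis by simp
qed

lemma eig_orth:
  assumes "herm M" "M *v x = l *s x" "M *v y = m *s y" "cnj l = l" "l \<noteq> m"
  shows "cinner x y = 0"
proof -
  have "m * cinner x y = l * cinner x y"
    using herm_cinner[OF assms(1), of x y] assms(2,3,4) by (simp add: cinner_smult_right cinner_smult_left)
  with assms(5) show ?thesis by simp
qed

lemma cinner_peval_eig:
  assumes "herm M" "M *v w = r *s w" "cnj r = r"
  shows "cinner w (peval M q y) = poly q r * cinner w y"
proof (induction q)
  case (pCons a q)
  have "cinner w (M *v peval M q y) = r * cinner w (peval M q y)"
    using herm_cinner[OF assms(1), of w "peval M q y"] assms(2,3) by (simp add: cinner_smult_left)
  then show ?case using pCons.IH
    by (simp add: peval_pCons cinner_add_right cinner_smult_right algebra_simps)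
qed (simp add: cinner_def)

lemma peval_diff: "peval M (p - q) v = peval M p v - peval M q v"
proof -
  have "p - q = p + smult (-1) q" by simp
  then have "peval M (p - q) v = peval M p v + (-1) *s peval M q v"
    by (simp only: peval_add peval_smult)
  then show ?thesis by (simp add: vec_eq_iff)
qed

lemma peval_monom: "peval M (monom c k) v = c *s fpow M k v"
proof -
  have "peval M (monom c k) v = (\<Sum>i\<le>k. coeff (monom c k) i *s fpow M i v)"
    by (rule peval_bound) (simp add: degree_monom_le)
  also have "\<dots> = (\<Sum>i\<le>k. if i = k then c *s fpow M k v else 0)"
    by (rule sum.cong) (auto simp: coeff_monom smult_eq_0)
  also have "\<dots> = c *s fpow M k v"
    by simp
  finally show ?thesis .
qed

lemma ofreal_smult: "complex_of_real c *s (x::complex^'n::finite) = c *\<^sub>R x"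
  by (simp add: vec_eq_iff scaleR_conv_of_real[where 'a=complex])

lemma annihilator_exists:
  fixes M :: "complex^'n::finite^'n"
  shows "\<exists>q. q \<noteq> 0 \<and> peval M q v = 0"
proof -
  define N where "N = DIM(complex^'n)"
  define f where "f i = fpow M i v" for i
  show ?thesis
  proof (cases "inj_on f {..N}")
    case False
    then obtain i j where ij: "i \<le> N" "j \<le> N" "i \<noteq> j" "f i = f j"
      unfolding inj_on_def by auto
    define q where "q = monom (1::complex) i + smult (-1) (monom 1 j)"
    have "coeff q i = 1" using ij by (simp add: q_def)
    then have "q \<noteq> 0" by auto
    moreover have "peval M q v = 0"
      using ij by (simp add: q_def peval_diff peval_monom f_def)
    ultimately show ?thesis by blast
  next
    case True
    have "card (f ` {..N}) = Suc N" using True by (simp add: card_image)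
    then have "dependent (f ` {..N})"
      by (intro dependent_biggerset) (simp add: N_def del: DIM_cart)
    then obtain u where u: "\<exists>x\<in>f ` {..N}. u x \<noteq> 0" "(\<Sum>x\<in>f ` {..N}. u x *\<^sub>R x) = 0"
      using dependent_finite[of "f ` {..N}"] by auto
    define c where "c k = complex_of_real (u (f k))" for k
    define q where "q = (\<Sum>k\<le>N. monom (c k) k)"
    have cq: "coeff q i = (if i \<le> N then c i else 0)" for i
      by (simp add: q_def coeff_sum coeff_monom)
    have dq: "degree q \<le> N"
      by (rule ccontr) (use cq[of "degree q"] in \<open>auto simp: q_def\<close>)
    from u(1) obtain k where k: "k \<le> N" "u (f k) \<noteq> 0" by auto
    then have "coeff q k \<noteq> 0" by (simp add: cq c_def)
    then have "q \<noteq> 0" by auto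
    have "peval M q v = (\<Sum>i\<le>N. coeff q i *s fpow M i v)"
      by (rule peval_bound[OF dq])
    also have "\<dots> = (\<Sum>i\<le>N. u (f i) *\<^sub>R f i)"
      by (simp add: cq c_def ofreal_smult f_def)
    also have "\<dots> = (\<Sum>x\<in>f ` {..N}. u x *\<^sub>R x)"
      using sum.reindex[OF True, of "\<lambda>x. u x *\<^sub>R x"] by simp
    also have "\<dots> = 0" by (rule u(2))
    finally show ?thesis using \<open>q \<noteq> 0\<close> by blast
  qed
qed




lemma eigvec_in_krylov:
  fixes M :: "complex^'n::finite^'n"
  assumes "v \<noteq> 0"
  shows "\<exists>h r. peval M h v \<noteq> 0 \<and> M *v peval M h v = r *s peval M h v"
proof -
  define P where "P n = (\<exists>q. q \<noteq> 0 \<and> peval M q v = 0 \<and> degree q = n)" for n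
  have ex: "\<exists>n. P n" using annihilator_exists[of M v] unfolding P_def by blast
  define n where "n = (LEAST n. P n)"
  have Pn: "P n" unfolding n_def using ex by (rule LeastI_ex)
  then obtain g where g: "g \<noteq> 0" "peval M g v = 0" "degree g = n" unfolding P_def by blast
  have min: "\<And>q. q \<noteq> 0 \<Longrightarrow> peval M q v = 0 \<Longrightarrow> n \<le> degree q"
    unfolding n_def by (rule Least_le) (auto simp: P_def)
  have "degree g \<noteq> 0"
  proof
    assume "degree g = 0"
    then have "g = [:coeff g 0:]" by (metis degree_0_id)
    then have "peval M g v = coeff g 0 *s v" by (metis peval_const)
    moreover have "coeff g 0 \<noteq> 0" using \<open>g = [:coeff g 0:]\<close> g(1) by fastforce
    ultimately show False using g(2) assms smult_eq_0 by metis
  qed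
  then have "\<not> constant (poly g)" by (simp add: constant_degree)
  then obtain r where "poly g r = 0" using fundamental_theorem_of_algebra by blast
  then have "[:-r, 1:] dvd g" by (simp add: poly_eq_0_iff_dvd)
  then obtain h where h: "g = [:-r, 1:] * h" by (elim dvdE)
  have "h \<noteq> 0" using h g(1) by auto
  then have "degree ([:-r, 1:] * h) = degree [:-r, 1:] + degree h"
    by (intro degree_mult_eq) auto
  then have dg: "degree g = Suc (degree h)" using h by simp
  have nz: "peval M h v \<noteq> 0"
  proof
    assume "peval M h v = 0"
    from min[OF \<open>h \<noteq> 0\<close> this] g(3) dg show False by simp
  qed
  have "peval M [:-r, 1:] (peval M h v) = 0" using g(2) h peval_mult[of M "[:-r, 1:]" h v] by metis
  then have "M *v peval M h v = r *s peval M h v"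
    by (simp add: peval_linear_factor)
  with nz show ?thesis by blast
qed

lemma eig_space_smult:
  fixes M :: "complex^'n::finite^'n"
  shows "x \<in> eig_space M r \<Longrightarrow> c *s x \<in> eig_space M r"
  by (simp add: eig_space_def mv_smult vec_eq_iff mult.left_commute)

lemma eig_space_add:
  fixes M :: "complex^'n::finite^'n"
  shows "x \<in> eig_space M r \<Longrightarrow> y \<in> eig_space M r \<Longrightarrow> x + y \<in> eig_space M r"
  by (simp add: eig_space_def mv_add vec_eq_iff distrib_left)

lemma eig_space_diff:
  fixes M :: "complex^'n::finite^'n"
  shows "x \<in> eig_space M r \<Longrightarrow> y \<in> eig_space M r \<Longrightarrow> x - y \<in> eig_space M r"
  using eig_space_add[of x M r "(-1) *s y"] eig_space_smult[of y M r "-1"]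
  by (simp add: vec_eq_iff)

lemma eig_space_zero: "0 \<in> eig_space M r"
  by (simp add: eig_space_def mv_zero)

lemma subspace_eig_space: "subspace (eig_space M r)"
  unfolding subspace_def
  using eig_space_zero eig_space_add eig_space_smult[of _ M r] ofreal_smult
  by metis

lemma proj_exists:
  fixes M :: "complex^'n::finite^'n"
  shows "\<exists>w \<in> eig_space M r. \<forall>v \<in> eig_space M r. cinner v (u - w) = 0"
proof -
  obtain y z where yz: "y \<in> span (eig_space M r)"
    "\<And>w. w \<in> span (eig_space M r) \<Longrightarrow> orthogonal z w" "u = y + z"
    using orthogonal_subspace_decomp_exists by blast
  have sp: "span (eig_space M r) = eig_space M r"
    using subspace_eig_space by (simp add: span_eq_iff)
  have "cinner v (u - y) = 0" if v: "v \<in> eig_space M r" for v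
  proof -
    have "u - y = z" using yz(3) by simp
    have "orthogonal z v" using yz(2) v sp by auto
    then have "Re (cinner v z) = 0" by (simp add: Re_cinner orthogonal_def inner_commute)
    moreover have "\<i> *s v \<in> eig_space M r" by (rule eig_space_smult[OF v])
    then have "orthogonal z (\<i> *s v)" using yz(2) sp by auto
    then have "Im (cinner v z) = 0" by (simp add: Im_cinner orthogonal_def inner_commute)
    ultimately show ?thesis using \<open>u - y = z\<close> by (simp add: complex_eq_iff)
  qed
  then show ?thesis using yz(1) sp by auto
qed

lemma eig_proj_eq:
  fixes M :: "complex^'n::finite^'n"
  assumes "w \<in> eig_space M r" "\<forall>v \<in> eig_space M r. cinner v (u - w) = 0"
  shows "eig_proj M r u = w"
  unfolding eig_proj_def
proof (rule the_equality)
  show "w \<in> eig_space M r \<and> (\<forall>v\<in>eig_space M r. cinner v (u - w) = 0)" using assms by blast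
next
  fix w' assume w': "w' \<in> eig_space M r \<and> (\<forall>v\<in>eig_space M r. cinner v (u - w') = 0)"
  define d where "d = w' - w"
  have d: "d \<in> eig_space M r" unfolding d_def using w' assms(1) by (simp add: eig_space_diff)
  have "cinner d (u - w) = 0" "cinner d (u - w') = 0" using d assms w' by auto
  then have "cinner d ((u - w) - (u - w')) = 0" by (simp add: cinner_diff_right)
  moreover have "(u - w) - (u - w') = d" by (simp add: d_def)
  ultimately have "d = 0" by (simp add: cinner_self_eq_0)
  then show "w' = w" by (simp add: d_def)
qed

lemma eig_proj_zero:
  fixes M :: "complex^'n::finite^'n"
  assumes "eig_proj M r u = 0" "v \<in> eig_space M r"
  shows "cinner v u = 0"
proof -
  obtain w where w: "w \<in> eig_space M r" "\<forall>v \<in> eig_space M r. cinner v (u - w) = 0"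
    using proj_exists by blast
  with assms(1) have "w = 0" using eig_proj_eq by metis
  with w assms(2) show ?thesis by simp
qed

lemma mat_spec_finite:
  fixes M :: "complex^'n::finite^'n"
  assumes "herm M"
  shows "finite (mat_spec M)"
proof -
  define ev where "ev l = (SOME v. v \<noteq> 0 \<and> M *v v = l *s v)" for l
  have ev: "ev l \<noteq> 0 \<and> M *v ev l = l *s ev l" if "l \<in> mat_spec M" for l
    using that unfolding mat_spec_def ev_def by (metis (mono_tags, lifting) someI_ex mem_Collect_eq)
  have inj: "inj_on ev (mat_spec M)"
  proof (rule inj_onI)
    fix l m assume lm: "l \<in> mat_spec M" "m \<in> mat_spec M" "ev l = ev m"
    then have "l *s ev l = m *s ev l" using ev by metis
    then have "(l - m) *s ev l = 0" by (simp add: vec_eq_iff algebra_simps)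
    then show "l = m" using ev[OF lm(1)] smult_eq_0 by auto
  qed
  have "pairwise orthogonal (ev ` mat_spec M)"
  proof (rule pairwiseI)
    fix x y assume xy: "x \<in> ev ` mat_spec M" "y \<in> ev ` mat_spec M" "x \<noteq> y"
    then obtain l m where lm: "l \<in> mat_spec M" "m \<in> mat_spec M" "x = ev l" "y = ev m" by auto
    then have "l \<noteq> m" using xy(3) by auto
    have "cnj l = l" using eig_real[OF assms] ev[OF lm(1)] by blast
    then have "cinner x y = 0" using eig_orth[OF assms] ev lm \<open>l \<noteq> m\<close> by metis
    then show "orthogonal x y" using Re_cinner[of x y] by (simp add: orthogonal_def)
  qed
  moreover have "0 \<notin> ev ` mat_spec M" using ev by auto
  ultimately have "independent (ev ` mat_spec M)" by (rule pairwise_orthogonal_independent)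
  then have "finite (ev ` mat_spec M)" using independent_bound by blast
  then show ?thesis using inj finite_imageD by blast
qed




lemma relpow_sym:
  assumes "\<forall>x y. E x y \<longrightarrow> E y x"
  shows "(x, y) \<in> edge_rel E ^^ n \<Longrightarrow> (y, x) \<in> edge_rel E ^^ n"
proof (induction n arbitrary: x y)
  case (Suc n)
  then obtain z where z: "(x, z) \<in> edge_rel E ^^ n" "(z, y) \<in> edge_rel E" by (meson relpow_Suc_E)
  have "E z y" using z(2) by (simp add: edge_rel_def)
  then have "E y z" using assms by blast
  then have "(z, x) \<in> edge_rel E ^^ n" "(y, z) \<in> edge_rel E"
    using Suc.IH[OF z(1)] by (auto simp: edge_rel_def)
  then show ?case by (rule relpow_Suc_I2[rotated])
qed simp

lemma axis_comp: "axis a (1::complex) $ y = (if y = a then 1 else 0)"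
  by (simp add: axis_def)

locale gmat =
  fixes E :: "'n::finite \<Rightarrow> 'n \<Rightarrow> bool" and M :: "complex^'n^'n" and \<sigma> :: complex
  assumes sym: "\<forall>x y. E x y \<longrightarrow> E y x"
    and offd: "\<forall>x y. x \<noteq> y \<longrightarrow> M$x$y = (if E x y then \<sigma> else 0)"
    and sig: "\<sigma> = 1 \<or> \<sigma> = -1"
begin

lemma symE: "E x y \<Longrightarrow> (y, x) \<in> edge_rel E"
  using sym by (simp add: edge_rel_def)

lemma offdE: "x \<noteq> y \<Longrightarrow> M$x$y = (if E x y then \<sigma> else 0)"
  using offd by blast

lemma supp:
  "fpow M j (axis a 1) $ y \<noteq> 0 \<Longrightarrow> \<exists>i\<le>j. (a, y) \<in> edge_rel E ^^ i"
proof (induction j arbitrary: y)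
  case 0
  then show ?case by (auto simp: axis_comp split: if_splits)
next
  case (Suc j)
  have "(\<Sum>x\<in>UNIV. M$y$x * fpow M j (axis a 1) $ x) \<noteq> 0"
    using Suc.prems by (simp add: fpow_Suc matrix_vector_mult_def)
  then obtain x where x: "M$y$x * fpow M j (axis a 1) $ x \<noteq> 0"
    using sum.neutral[of UNIV "\<lambda>x. M$y$x * fpow M j (axis a 1) $ x"] by blast
  then have "fpow M j (axis a 1) $ x \<noteq> 0" by auto
  then obtain i where i: "i \<le> j" "(a, x) \<in> edge_rel E ^^ i" using Suc.IH[of x] by blast
  show ?case
  proof (cases "x = y")
    case True
    then show ?thesis using i by (intro exI[of _ i]) auto
  next
    case False
    then have "E y x" using x offdE[of y x] by (metis mult_zero_left)
    then have "(x, y) \<in> edge_rel E" by (rule symE)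
    then have "(a, y) \<in> edge_rel E ^^ Suc i" by (rule relpow_Suc_I[OF i(2)])
    then show ?thesis using i by (intro exI[of _ "Suc i"]) auto
  qed
qed

lemma lead:
  "(a, y) \<in> edge_rel E ^^ j \<Longrightarrow> (\<forall>i<j. (a, y) \<notin> edge_rel E ^^ i) \<Longrightarrow>
   \<exists>c>0. fpow M j (axis a 1) $ y = \<sigma>^j * complex_of_real c"
proof (induction j arbitrary: y)
  case 0
  then show ?case by (intro exI[of _ 1]) (auto simp: axis_comp)
next
  case (Suc j)
  define v where "v = fpow M j (axis a 1)"
  have nosh: "(a, y) \<notin> edge_rel E ^^ i" if "i \<le> j" for i using Suc.prems(2) that by auto
  obtain z where z: "(a, z) \<in> edge_rel E ^^ j" "(z, y) \<in> edge_rel E" using Suc.prems(1) by auto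
  have vy: "v $ y = 0" using supp[of j a y] nosh unfolding v_def by blast
  have trm: "\<exists>c\<ge>0. M$y$x * v$x = \<sigma>^Suc j * complex_of_real c
              \<and> (x = z \<longrightarrow> c > 0)" for x
  proof (cases "x = y")
    case True
    have "x \<noteq> z" using True z nosh[of j] by auto
    then show ?thesis using vy True by (intro exI[of _ 0]) simp
  next
    case xy: False
    show ?thesis
    proof (cases "E y x")
      case False
      have "x \<noteq> z"
      proof
        assume "x = z"
        then have "E x y" using z(2) by (simp add: edge_rel_def)
        then have "E y x" using sym by blast
        with False show False by contradiction
      qed
      moreover have "M$y$x = 0" using offdE[of y x] False xy by auto
      ultimately show ?thesis by (intro exI[of _ 0]) simp
    next
      case True
      then have Mx: "M$y$x = \<sigma>" using offdE[of y x] xy by auto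
      have exact: "\<forall>i<j. (a, x) \<notin> edge_rel E ^^ i"
      proof (intro allI impI notI)
        fix i assume ii: "i < j" "(a, x) \<in> edge_rel E ^^ i"
        have "(x, y) \<in> edge_rel E" using True by (rule symE)
        then have "(a, y) \<in> edge_rel E ^^ Suc i" by (rule relpow_Suc_I[OF ii(2)])
        with nosh[of "Suc i"] \<open>i < j\<close> show False by auto
      qed
      show ?thesis
      proof (cases "v $ x = 0")
        case True
        moreover have "x \<noteq> z \<or> v $ x \<noteq> 0"
        proof (cases "x = z")
          case True
          then have "(a, x) \<in> edge_rel E ^^ j" using z(1) by simp
          then obtain c where "c > 0" "v $ x = \<sigma>^j * complex_of_real c"
            using Suc.IH[of x] exact unfolding v_def by blast
          then show ?thesis using sig by auto
        qed simp
        ultimately show ?thesis by (intro exI[of _ 0]) auto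
      next
        case False
        then obtain i where i: "i \<le> j" "(a, x) \<in> edge_rel E ^^ i" using supp unfolding v_def by blast
        have "i = j"
        proof (rule ccontr)
          assume "i \<noteq> j"
          then have "i < j" using i by simp
          have "(x, y) \<in> edge_rel E" using True by (rule symE)
          then have "(a, y) \<in> edge_rel E ^^ Suc i" by (rule relpow_Suc_I[OF i(2)])
          with nosh[of "Suc i"] \<open>i < j\<close> show False by auto
        qed
        then have "(a, x) \<in> edge_rel E ^^ j" using i(2) by simp
        then obtain c where "c > 0" "v $ x = \<sigma>^j * complex_of_real c"
          using Suc.IH[of x] exact unfolding v_def by blast
        then show ?thesis using Mx by (intro exI[of _ c]) auto
      qed
    qed
  qed
  then obtain d where d: "\<And>x. d x \<ge> 0 \<and> M$y$x * v$x = \<sigma>^Suc j * complex_of_real (d x)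
              \<and> (x = z \<longrightarrow> d x > 0)" by metis
  have "fpow M (Suc j) (axis a 1) $ y = (\<Sum>x\<in>UNIV. M$y$x * v$x)"
    by (simp add: fpow_Suc matrix_vector_mult_def v_def)
  also have "\<dots> = (\<Sum>x\<in>UNIV. \<sigma>^Suc j * complex_of_real (d x))"
    using d by simp
  also have "\<dots> = \<sigma>^Suc j * complex_of_real (\<Sum>x\<in>UNIV. d x)"
    by (simp add: sum_distrib_left)
  finally show ?case
    using d by (intro exI[of _ "\<Sum>x\<in>UNIV. d x"]) (auto intro!: sum_pos2[of UNIV z])
qed

end




context gmat
begin

lemma dist_bound:
  assumes conn: "\<forall>x y. (x, y) \<in> (edge_rel E)\<^sup>*"
    and deg: "degree p = k" "coeff p k = 1"
    and ann: "peval M p (axis a 1 + s *s axis b 1) = 0"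
  shows "graph_dist E a b \<le> 2 * k"
proof (rule ccontr)
  assume nle: "\<not> graph_dist E a b \<le> 2 * k"
  define d where "d = graph_dist E a b"
  obtain n0 where "(a, b) \<in> edge_rel E ^^ n0" using conn rtrancl_power by blast
  then have dR: "(a, b) \<in> edge_rel E ^^ d" unfolding d_def graph_dist_def by (rule LeastI)
  have dmin: "d \<le> m" if "(a, b) \<in> edge_rel E ^^ m" for m
    unfolding d_def graph_dist_def using that by (rule Least_le)
  have kd: "2 * k < d" using nle d_def by simp
  then have "(a, b) \<in> edge_rel E ^^ (k + (d - k))" using dR by simp
  then obtain w where w: "(a, w) \<in> edge_rel E ^^ k" "(w, b) \<in> edge_rel E ^^ (d - k)"
    by (auto simp: relpow_add)
  have nosh: "\<forall>i<k. (a, w) \<notin> edge_rel E ^^ i"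
  proof (intro allI impI notI)
    fix i assume i: "i < k" "(a, w) \<in> edge_rel E ^^ i"
    then have "(a, b) \<in> edge_rel E ^^ (i + (d - k))" using w(2) by (auto simp: relpow_add)
    then have "d \<le> i + (d - k)" by (rule dmin)
    with i kd show False by linarith
  qed
  obtain c where c: "c > 0" "fpow M k (axis a 1) $ w = \<sigma>^k * complex_of_real c"
    using lead[OF w(1) nosh] by blast
  have za: "fpow M i (axis a 1) $ w = 0" if "i < k" for i
  proof (rule ccontr)
    assume "fpow M i (axis a 1) $ w \<noteq> 0"
    then obtain i' where "i' \<le> i" "(a, w) \<in> edge_rel E ^^ i'" using supp by blast
    with nosh that show False by auto
  qed
  have zb: "fpow M i (axis b 1) $ w = 0" if "i \<le> k" for i
  proof (rule ccontr)
    assume "fpow M i (axis b 1) $ w \<noteq> 0"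
    then obtain i' where i': "i' \<le> i" "(b, w) \<in> edge_rel E ^^ i'" using supp by blast
    then have "(w, b) \<in> edge_rel E ^^ i'" using relpow_sym[OF sym] by blast
    then have "(a, b) \<in> edge_rel E ^^ (k + i')" using w(1) by (auto simp: relpow_add)
    then have "d \<le> k + i'" by (rule dmin)
    with i' that kd show False by linarith
  qed
  define f where "f i = coeff p i * (fpow M i (axis a 1) $ w + s * fpow M i (axis b 1) $ w)" for i
  have "peval M p (axis a 1 + s *s axis b 1) $ w = (\<Sum>i\<le>k. f i)"
    by (simp add: peval_def deg f_def fpow_add fpow_smult distrib_left mult.assoc)
  also have "\<dots> = (\<Sum>i<k. f i) + f k"
    by (simp add: lessThan_Suc_atMost[symmetric])
  also have "(\<Sum>i<k. f i) = 0"
    by (rule sum.neutral) (auto simp: f_def za zb)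
  also have "f k = \<sigma>^k * complex_of_real c"
    by (simp add: f_def deg c zb)
  finally have "\<sigma>^k * complex_of_real c = 0" using ann by simp
  moreover have "\<sigma> \<noteq> 0" using sig by auto
  ultimately show False using c(1) by simp
qed

end




lemma herm_adj:
  assumes "\<forall>x y. E x y \<longrightarrow> E y x"
  shows "herm (adj_matrix E)"
proof -
  have "E i j = E j i" for i j using assms by blast
  then show ?thesis unfolding herm_def adj_matrix_def by simp
qed

lemma herm_deg: "herm (deg_matrix E)"
  unfolding herm_def deg_matrix_def by auto

lemma herm_diff:
  assumes "herm X" "herm Y" shows "herm (X - Y)"
  unfolding herm_def
proof (intro allI)
  fix i j
  have "X$i$j = cnj (X$j$i)" "Y$i$j = cnj (Y$j$i)" using assms unfolding herm_def by blast+
  then show "(X - Y)$i$j = cnj ((X - Y)$j$i)" by simp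
qed

lemma herm_add:
  assumes "herm X" "herm Y" shows "herm (X + Y)"
  unfolding herm_def
proof (intro allI)
  fix i j
  have "X$i$j = cnj (X$j$i)" "Y$i$j = cnj (Y$j$i)" using assms unfolding herm_def by blast+
  then show "(X + Y)$i$j = cnj ((X + Y)$j$i)" by simp
qed

lemma graph_setup:
  assumes "simple_graph E" "M \<in> {adj_matrix E, laplacian E, signless_laplacian E}"
  shows "herm M \<and> (\<exists>\<sigma>. gmat E M \<sigma>)"
proof -
  have sym: "\<forall>x y. E x y \<longrightarrow> E y x" using assms(1) unfolding simple_graph_def by (rule conjunct1)
  have hA: "herm (adj_matrix E)" using herm_adj[OF sym] .
  have offA: "x \<noteq> y \<Longrightarrow> deg_matrix E $ x $ y = 0" for x y by (simp add: deg_matrix_def)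
  have sig1: "(1::complex) = 1 \<or> (1::complex) = -1" by simp
  have sig2: "(-1::complex) = 1 \<or> (-1::complex) = -1" by simp
  have gA: "gmat E (adj_matrix E) 1"
    by (rule gmat.intro[OF sym _ sig1]) (simp add: adj_matrix_def)
  have gL: "gmat E (laplacian E) (-1)"
    by (rule gmat.intro[OF sym _ sig2]) (simp add: laplacian_def adj_matrix_def offA)
  have gQ: "gmat E (signless_laplacian E) 1"
    by (rule gmat.intro[OF sym _ sig1]) (simp add: signless_laplacian_def adj_matrix_def offA)
  have hL: "herm (laplacian E)" unfolding laplacian_def by (rule herm_diff[OF herm_deg hA])
  have hQ: "herm (signless_laplacian E)" unfolding signless_laplacian_def by (rule herm_add[OF herm_deg hA])
  have "M = adj_matrix E \<or> M = laplacian E \<or> M = signless_laplacian E" using assms(2) by simp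
  then show ?thesis using gA gL gQ hA hL hQ by blast
qed

lemma spec_real:
  assumes "herm M" "l \<in> mat_spec M"
  shows "cnj l = l"
  using assms eig_real unfolding mat_spec_def by blast

theorem mainTheorem1:
  fixes E :: "'n::finite \<Rightarrow> 'n \<Rightarrow> bool" and M :: "complex^'n^'n"
    and a b :: 'n and s :: complex
  assumes "simple_graph E" and "connected_graph E"
    and "M \<in> {adj_matrix E, laplacian E, signless_laplacian E}"
    and "a \<noteq> b" and "s \<noteq> 0"
  shows "(is_eigenvector M (axis a 1 + s *s axis b 1) \<longrightarrow>
            card (eig_support M (axis a 1 + s *s axis b 1)) = 1)
       \<and> (\<not> is_eigenvector M (axis a 1 + s *s axis b 1) \<longrightarrow>
            real (card (eig_support M (axis a 1 + s *s axis b 1)))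
              \<ge> of_int \<lceil>real (graph_dist E a b) / 2\<rceil>)"
proof -
  define u where "u = axis a 1 + s *s axis b (1::complex)"
  obtain \<sigma> where H: "herm M" and G: "gmat E M \<sigma>" using graph_setup[OF assms(1,3)] by blast
  have u0: "u \<noteq> 0"
  proof
    assume "u = 0"
    then have "u $ a = 0" by simp
    then show False using assms(4) by (simp add: u_def axis_def)
  qed
  define P where "P = eig_support M u"
  have finP: "finite P" unfolding P_def eig_support_def
    using mat_spec_finite[OF H] by auto
  have part1: "card P = 1" if ev: "is_eigenvector M u"
  proof -
    obtain m where m: "M *v u = m *s u" using ev unfolding is_eigenvector_def by blast
    have ms: "m \<in> mat_spec M" using m u0 unfolding mat_spec_def by blast
    have ue: "u \<in> eig_space M m" using m by (simp add: eig_space_def)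
    have "eig_proj M m u = u"
      by (rule eig_proj_eq[OF ue]) (auto simp: cinner_def)
    then have mP: "m \<in> P" using ms u0 by (simp add: P_def eig_support_def)
    have "l = m" if lP: "l \<in> P" for l
    proof (rule ccontr)
      assume lm: "l \<noteq> m"
      have ls: "l \<in> mat_spec M" using lP by (simp add: P_def eig_support_def)
      have "\<forall>v \<in> eig_space M l. cinner v (u - 0) = 0"
      proof
        fix v assume "v \<in> eig_space M l"
        then have "M *v v = l *s v" by (simp add: eig_space_def)
        then show "cinner v (u - 0) = 0"
          using eig_orth[OF H _ m spec_real[OF H ls] lm] by simp
      qed
      then have "eig_proj M l u = 0" by (intro eig_proj_eq eig_space_zero)
      then show False using lP by (simp add: P_def eig_support_def)
    qed
    with mP have "P = {m}" by blast
    then show ?thesis by simp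
  qed
  define p where "p = (\<Prod>l\<in>P. [:-l, 1:])"
  have degp: "degree p = card P"
    unfolding p_def by (subst degree_prod_sum_eq) auto
  have lcp: "coeff p (card P) = 1"
    using lead_coeff_prod[of "\<lambda>l. [:-l, 1:]" P] degp by (simp add: p_def)
  have ann: "peval M p u = 0"
  proof (rule ccontr)
    assume v0: "peval M p u \<noteq> 0"
    obtain h r where hr: "peval M h (peval M p u) \<noteq> 0"
      "M *v peval M h (peval M p u) = r *s peval M h (peval M p u)"
      using eigvec_in_krylov[OF v0] by blast
    define w where "w = peval M h (peval M p u)"
    have wr: "M *v w = r *s w" "w \<noteq> 0" using hr by (simp_all add: w_def)
    have rr: "cnj r = r" by (rule eig_real[OF H wr])
    have "cinner w w = cinner w (peval M (h * p) u)" by (simp add: w_def peval_mult)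
    also have "\<dots> = poly (h * p) r * cinner w u" by (rule cinner_peval_eig[OF H wr(1) rr])
    also have "\<dots> = 0"
    proof (cases "r \<in> P")
      case True
      then have "poly p r = 0" using finP by (simp add: p_def poly_prod)
      then show ?thesis by simp
    next
      case False
      have "r \<in> mat_spec M" using wr unfolding mat_spec_def by blast
      then have "eig_proj M r u = 0" using False by (simp add: P_def eig_support_def)
      moreover have "w \<in> eig_space M r" using wr by (simp add: eig_space_def)
      ultimately have "cinner w u = 0" by (rule eig_proj_zero)
      then show ?thesis by simp
    qed
    finally show False using wr(2) cinner_self_eq_0 by blast
  qed
  have conn: "\<forall>x y. (x, y) \<in> (edge_rel E)\<^sup>*" using assms(2) unfolding connected_graph_def .
  have db: "graph_dist E a b \<le> 2 * card P"
    using gmat.dist_bound[OF G conn degp lcp] ann by (simp add: u_def)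
  have "real (graph_dist E a b) / 2 \<le> real (card P)" using db by linarith
  then have "\<lceil>real (graph_dist E a b) / 2\<rceil> \<le> int (card P)"
    by (simp add: ceiling_le_iff)
  then have part2: "real (card P) \<ge> of_int \<lceil>real (graph_dist E a b) / 2\<rceil>" by linarith
  show ?thesis using part1 part2 by (simp add: u_def P_def)
qed


end
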